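(* Let $n\in\mathbb{N}$, $t\geq0$, $c\geq1$, and $\mathcal{E}'_n=c\cdot\mathcal{E}_n$. Then $$\mathrm{Diff}_t(\mathcal{E}_n):=\left|\mathrm{Pr}^{\mathcal{E}_n}(\lozenge^{\leq t}g)-\mathrm{Pr}^{\mathcal{E}'_n}(\lozenge^{\leq t}g)\right|=\sum_{k=0}^{n-1}\frac{t^k}{k!}\left(e^{-t}-c^ke^{-ct}\right).$$ If $c>1$, the function $t\mapsto\mathrm{Diff}_t(\mathcal{E}_n)$ has a local maximum at $t=\frac{n\ln(c)}{c-1}$ that is global on $[0,\infty)$.
   Context: The Erlang CTMC $\mathcal{E}_n$ has non-goal states $s_0,\dots,s_{n-1}$ and a goal state $s_n=g$, initial state $s_0$ (for $n=0$ it consists of $g$ only), all $s_0,\dots,s_{n-1}$ carry the same label and $g$ a different one, all exit rates equal $1$, $P(s_i,s_{i+1})=1$ for $0\leq i<n$, and $P(g,g)=1$. (In a CTMC the process stays in state $s$ an exponentially distributed time with rate $E(s)$ and then jumps to $s'$ with probability $P(s,s')$.) $c\cdot\mathcal{E}_n$ is obtained by multiplying all exit rates by $c$. $\mathrm{Pr}^{\mathcal{M}}(\lozenge^{\leq t}g)$ is the probability that $\mathcal{M}$ started in its initial state reaches $g$ within time $t$. *)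

theory Defs
  imports "HOL-Probability.Probability"
begin

text \<open>The (scaled) Erlang CTMC c * E_n: states s_0,...,s_{n-1} and goal g = s_n,
  initial state s_0, exit rate E(s_i) = c for every state, P(s_i,s_{i+1}) = 1, P(g,g) = 1.
  Since the embedded jump chain is deterministic, the only path from s_0 visits
  s_0, s_1, ..., s_{n-1}, g in order; the sojourn time in s_i is an exponentially
  distributed random variable with rate E(s_i), and the sojourn times are independent.
  Hence the goal g is reached within time t iff the sum of the first n sojourn times is
  at most t.\<close>

definition erlang_exit_rate :: "real \<Rightarrow> nat \<Rightarrow> real" where
  "erlang_exit_rate c i = c"

definition sojourn_space :: "(nat \<Rightarrow> real) \<Rightarrow> nat \<Rightarrow> (nat \<Rightarrow> real) measure" where
  "sojourn_space E n = PiM {..<n} (\<lambda>i. density lborel (exponential_density (E i)))"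

definition reach_within :: "(nat \<Rightarrow> real) \<Rightarrow> nat \<Rightarrow> real \<Rightarrow> real" where
  "reach_within E n t =
     measure (sojourn_space E n) {T \<in> space (sojourn_space E n). (\<Sum>i<n. T i) \<le> t}"

text \<open>Pr^{c * E_n}(reach g within t); the unscaled chain E_n is the case c = 1.\<close>
definition Pr_erlang :: "real \<Rightarrow> nat \<Rightarrow> real \<Rightarrow> real" where
  "Pr_erlang c n t = reach_within (erlang_exit_rate c) n t"

definition Diff_erlang :: "real \<Rightarrow> nat \<Rightarrow> real \<Rightarrow> real" where
  "Diff_erlang c n t = \<bar>Pr_erlang 1 n t - Pr_erlang c n t\<bar>"

end

theory Submission
  imports Defs
begin

lemma reach_erlang:
  assumes c: "c > 0" and t: "t \<ge> 0"
  shows "Pr_erlang c n t = 1 - (\<Sum>k<n. (c*t)^k * exp (- c * t) / fact k)"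
proof -
  define D where "D = density lborel (exponential_density c)"
  define M where "M = PiM {..<n} (\<lambda>i. D)"
  have pD: "prob_space D" unfolding D_def using prob_space_exponential_density[OF c] .
  have sM: "sojourn_space (erlang_exit_rate c) n = M"
    unfolding sojourn_space_def M_def D_def erlang_exit_rate_def by simp
  interpret P: prob_space M unfolding M_def by (intro prob_space_PiM pD)
  have sD: "sets D = sets borel" unfolding D_def by simp
  show ?thesis
  proof (cases n)
    case 0
    have "{T \<in> space M. (\<Sum>i<n. T i) \<le> t} = space M" using 0 t by auto
    then show ?thesis unfolding Pr_erlang_def reach_within_def sM using 0 t by (simp add: P.prob_space)
  next
    case (Suc m)
    have ne: "{..<n} \<noteq> {}" using Suc by auto
    have rv: "P.random_variable borel (\<lambda>x. x i)" if "i \<in> {..<n}" for i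
      using that unfolding M_def
      by (metis measurable_cong_sets measurable_component_singleton sD sets_PiM_cong)
    have comp: "distr M borel (\<lambda>x. x i) = D" if "i \<in> {..<n}" for i
    proof -
      have "distr M borel (\<lambda>x. x i) = distr M D (\<lambda>x. x i)"
        by (rule distr_cong) (auto simp: sD)
      also have "\<dots> = D" unfolding M_def by (rule distr_PiM_component[OF pD that])
      finally show ?thesis .
    qed
    have ind: "P.indep_vars (\<lambda>i. borel) (\<lambda>i x. x i) {..<n}"
    proof (subst P.indep_vars_iff_distr_eq_PiM'[OF ne rv])
      have "distr M (\<Pi>\<^sub>M i\<in>{..<n}. borel) (\<lambda>x. \<lambda>i\<in>{..<n}. x i) = distr M M (\<lambda>x. x)"
        by (rule distr_cong) (auto simp: M_def space_PiM sD intro!: sets_PiM_cong)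
      also have "\<dots> = M" by simp
      also have "\<dots> = (\<Pi>\<^sub>M i\<in>{..<n}. distr M borel (\<lambda>x. x i))"
        unfolding M_def by (intro PiM_cong) (auto simp: comp[unfolded M_def])
      finally show "distr M (\<Pi>\<^sub>M i\<in>{..<n}. borel) (\<lambda>x. \<lambda>i\<in>{..<n}. x i) = (\<Pi>\<^sub>M i\<in>{..<n}. distr M borel (\<lambda>x. x i))" .
    qed auto
    have dist: "distributed M lborel (\<lambda>x. x i) (exponential_density c)" if "i \<in> {..<n}" for i
      unfolding distributed_def
    proof (intro conjI)
      show "distr M lborel (\<lambda>x. x i) = density lborel (exponential_density c)"
        using comp[OF that] unfolding D_def[symmetric]
        by (metis distr_cong sets_lborel)
      show "(\<lambda>x. ennreal (exponential_density c x)) \<in> borel_measurable lborel" by simp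
      show "(\<lambda>x. x i) \<in> measurable M lborel" using rv[OF that] by simp
    qed
    have "distributed M lborel (\<lambda>x. \<Sum>i\<in>{..<n}. x i) (erlang_density (card {..<n} - 1) c)"
      by (rule P.exponential_distributed_sum[OF _ ne c dist ind]) auto
    then have "P.prob {x \<in> space M. (\<Sum>i<n. x i) \<le> t} = erlang_CDF (n - 1) c t"
      by (intro P.erlang_distributed_le) (auto simp: t c)
    then show ?thesis unfolding Pr_erlang_def reach_within_def sM using Suc t
      by (simp add: erlang_CDF_def lessThan_Suc_atMost)
  qed
qed
lemma aux: "(((1 + real m) * (a * (a * t) ^ m) * exp (- (a * t)) -
      exp (- (a * t)) * a * (a * t * (a * t) ^ m)) /
     ((1 + real m) * fact m) :: real) =
     a * (a * t) ^ m * exp (- (a * t)) / fact m -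
     a * (a * t * (a * t) ^ m) * exp (- (a * t)) / ((1 + real m) * fact m)"
  by (simp add: diff_divide_distrib) (simp add: mult_ac)

lemma S_deriv:
  fixes a :: real
  shows "DERIV (\<lambda>t. \<Sum>k<Suc m. (a*t)^k * exp (- a * t) / fact k) t :> - (a * (a*t)^m * exp (- a * t) / fact m)"
proof (induction m)
  case 0
  show ?case by (auto intro!: derivative_eq_intros)
next
  case (Suc m)
  have T: "DERIV (\<lambda>t. (a*t)^Suc m * exp (- a * t) / fact (Suc m)) t :>
      (a * (a*t)^m * exp (- a * t) / fact m - a * (a*t)^Suc m * exp (- a * t) / fact (Suc m))"
    by (rule derivative_eq_intros refl | simp)+ (simp add: fact_Suc divide_simps aux)
  have eq: "(\<lambda>t. \<Sum>k<Suc (Suc m). (a*t)^k * exp (- a * t) / fact k) =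
    (\<lambda>t. (\<Sum>k<Suc m. (a*t)^k * exp (- a * t) / fact k) + (a*t)^Suc m * exp (- a * t) / fact (Suc m))"
    by (rule ext) (simp only: sum.lessThan_Suc)
  show ?case unfolding eq by (rule DERIV_cong[OF DERIV_add[OF Suc T]]) simp
qed

theorem proposition4:
  fixes n :: nat and c :: real
  assumes "c \<ge> 1"
  shows "(\<forall>t\<ge>0. Diff_erlang c n t =
            (\<Sum>k<n. t ^ k / fact k * (exp (- t) - c ^ k * exp (- c * t))))
       \<and> (c > 1 \<longrightarrow>
            (let t0 = real n * ln c / (c - 1) in
               (\<exists>\<delta>>0. \<forall>t\<ge>0. \<bar>t - t0\<bar> < \<delta> \<longrightarrow> Diff_erlang c n t \<le> Diff_erlang c n t0)
             \<and> (\<forall>t\<ge>0. Diff_erlang c n t \<le> Diff_erlang c n t0)))"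
proof -
  have c0: "c > 0" using assms by simp
  define S where "S a t = (\<Sum>k<n. (a*t)^k * exp (- a * t) / fact k)" for a t :: real
  have Pr: "Pr_erlang a n t = 1 - S a t" if "a > 0" "t \<ge> 0" for a t
    using reach_erlang[OF that] unfolding S_def .
  have Sc: "S c t = S 1 (c * t)" for t unfolding S_def by simp
  have Sdec: "S 1 y \<le> S 1 x" if "0 \<le> x" "x \<le> y" for x y
  proof (cases n)
    case 0 then show ?thesis by (simp add: S_def)
  next
    case (Suc m)
    have d: "DERIV (S 1) z :> - (1 * (1*z)^m * exp (- 1 * z) / fact m)" for z
      unfolding S_def Suc by (rule S_deriv)
    show ?thesis
    proof (rule DERIV_nonpos_imp_decreasing_open[OF that(2)])
      fix z assume "x < z" "z < y"
      then show "\<exists>y. DERIV (S 1) z :> y \<and> y \<le> 0" using that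
        by (intro exI[of _ "- (1 * (1*z)^m * exp (- 1 * z) / fact m)"] conjI d) auto
    next
      show "continuous_on {x..y} (S 1)"
        by (intro continuous_at_imp_continuous_on ballI DERIV_isCont[OF d])
    qed
  qed
  have D: "Diff_erlang c n t = S 1 t - S c t" if "t \<ge> 0" for t
  proof -
    have "S c t \<le> S 1 t" unfolding Sc using that assms
      by (intro Sdec) (auto simp: mult_le_cancel_right1)
    then show ?thesis unfolding Diff_erlang_def using Pr[OF _ that, of 1] Pr[OF c0 that] by simp
  qed
  have F: "S 1 t - S c t = (\<Sum>k<n. t ^ k / fact k * (exp (- t) - c ^ k * exp (- c * t)))" for t
    unfolding S_def sum_subtractf[symmetric]
    by (intro sum.cong refl) (simp add: field_simps power_mult_distrib)
  have part1: "\<forall>t\<ge>0. Diff_erlang c n t = (\<Sum>k<n. t ^ k / fact k * (exp (- t) - c ^ k * exp (- c * t)))"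
    using D F by simp
  have part2: "\<forall>t\<ge>0. Diff_erlang c n t \<le> Diff_erlang c n (real n * ln c / (c - 1))" if c1: "c > 1"
  proof (intro allI impI)
    fix t :: real assume t: "t \<ge> 0"
    define t0 where "t0 = real n * ln c / (c - 1)"
    have t00: "t0 \<ge> 0" unfolding t0_def using c1 by auto
    define g where "g t = S 1 t - S c t" for t
    show "Diff_erlang c n t \<le> Diff_erlang c n (real n * ln c / (c - 1))"
      unfolding t0_def[symmetric] D[OF t] D[OF t00] g_def[symmetric]
    proof (cases n)
      case 0 then show "g t \<le> g t0" by (simp add: g_def S_def)
    next
      case (Suc m)
      define g' where "g' x = x^m / fact m * (exp (real n * ln c - c * x) - exp (- x))" for x
      have d: "DERIV g x :> g' x" for x
      proof -
        have dd: "DERIV g x :> (- (1 * (1*x)^m * exp (- 1 * x) / fact m)) - (- (c * (c*x)^m * exp (- c * x) / fact m))"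
          unfolding g_def S_def Suc by (intro DERIV_diff S_deriv)
        have ee: "exp (real n * ln c - c * x) = c ^ n * exp (- c * x)"
          using c0 by (simp add: exp_diff exp_of_nat_mult divide_inverse exp_minus)
        show ?thesis unfolding g'_def ee
          by (rule DERIV_cong[OF dd]) (simp add: Suc field_simps power_mult_distrib)
      qed
      have cont: "continuous_on {a..b} g" for a b
        by (intro continuous_at_imp_continuous_on ballI DERIV_isCont[OF d])
      have sgn1: "g' x \<ge> 0" if "0 \<le> x" "x \<le> t0" for x
      proof -
        have "(c - 1) * x \<le> real n * ln c" using that c1 unfolding t0_def by (simp add: field_simps)
        then have "exp (- x) \<le> exp (real n * ln c - c * x)" by (simp add: algebra_simps)
        then show ?thesis unfolding g'_def using that by simp
      qed
      have sgn2: "g' x \<le> 0" if "t0 \<le> x" for x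
      proof -
        have "x \<ge> 0" using that t00 by simp
        have "(c - 1) * x \<ge> real n * ln c" using that c1 unfolding t0_def by (simp add: field_simps)
        then have "exp (- x) \<ge> exp (real n * ln c - c * x)" by (simp add: algebra_simps)
        then show ?thesis unfolding g'_def using \<open>x \<ge> 0\<close>
          by (intro mult_nonneg_nonpos) auto
      qed
      show "g t \<le> g t0"
      proof (cases "t \<le> t0")
        case True
        show ?thesis
          by (rule DERIV_nonneg_imp_increasing_open[OF True _ cont])
             (use d sgn1 t in fastforce)
      next
        case False
        show ?thesis
          by (rule DERIV_nonpos_imp_decreasing_open[of t0 t, OF _ _ cont])
             (use False d sgn2 in fastforce)+
      qed
    qed
  qed
  show ?thesis
  proof (intro conjI impI part1)
    assume c1: "c > 1"
    show "let t0 = real n * ln c / (c - 1) in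
        (\<exists>\<delta>>0. \<forall>t\<ge>0. \<bar>t - t0\<bar> < \<delta> \<longrightarrow> Diff_erlang c n t \<le> Diff_erlang c n t0)
      \<and> (\<forall>t\<ge>0. Diff_erlang c n t \<le> Diff_erlang c n t0)"
      unfolding Let_def using part2[OF c1] by (intro conjI exI[of _ 1]) auto
  qed
qed
end
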